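(* Let $\Gamma=(N,A,u)$ be a finite game and $\mu\in\Delta A$. Then $\mu$ is directly implementable if and only if $\mu\in\mathcal{I}$, where $\mathcal{I}=\bigcup_{q\in\mathrm{CE}(\Gamma)}\mathcal{I}_q$ and $\mathcal{I}_q=\{\mu'\in\Delta A:\mathrm{supp}(\mu')\subseteq\mathrm{supp}(q),\ \mathbb{E}_{\mu'}[\log q]=\mathbb{E}_q[\log q]\}$.
   Context: A finite game $\Gamma=(N,A,u)$ has a finite set of players $N$, finite action sets $A_i$, $A=\times_iA_i$, utilities $u_i:A\to\mathbb{R}$ (extended multilinearly to mixed profiles). $\mathrm{CE}(\Gamma)$ is the set of correlated equilibria: $p\in\Delta A$ such that for all $i$, all $a_i$ with $\sum_{a_{-i}}p_{a_i,a_{-i}}>0$, all $b\in A_i$, $\sum_{a_{-i}}p_{a_i,a_{-i}}[u_i(a_i,a_{-i})-u_i(b,a_{-i})]\ge0$. Convention $0\log0=0$. A partially specified data-generating process is $\mathcal{D}=(M,\eta,\mathcal{F})$ with $M=\times_iM_i$ finite, $\eta\in\Delta M$, $\mathcal{F}\subseteq\{f:M\to\mathbb{R}\}$; with $\Delta_{\mathcal{D}}=\{q\in\Delta M:\sum_mq_mf(m)=\sum_m\eta_mf(m)\ \forall f\in\mathcal{F}\}$, the belief is the unique maximizer $q$ of $-\sum_mq_m\log q_m$ over $\Delta_{\mathcal{D}}$. A strategy profile is $\sigma=(\sigma_i)$, $\sigma_i:M_i\to\Delta A_i$, $\sigma(a\mid m)=\prod_i\sigma_i(a_i\mid m_i)$,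 $(\eta\circ\sigma)(a)=\sum_m\eta_m\sigma(a\mid m)$. $\mu$ is implemented by $\mathcal{D}$ via $\sigma$ if (i) $q$ is the maximum-entropy belief; (ii) for all $i$, all $m_i$ with positive $q$-marginal, all $a_i'$: $\sum_{m_{-i}}q_{m_i,m_{-i}}[u_i(\sigma_i(m_i),\sigma_{-i}(m_{-i}))-u_i(a_i',\sigma_{-i}(m_{-i}))]\ge0$; (iii) $\mu=\eta\circ\sigma$. An outcome $\mu$ is directly implementable if it is implemented in this sense by some $\mathcal{D}=(M,\eta,\mathcal{F})$ with $M=A$ (i.e. $M_i=A_i$) and obedient strategies $\sigma_i(a_i)=$ the point mass on $a_i$ for every $i$. *)

theory Defs
  imports Complex_Main "HOL-Library.FuncSet"
begin

definition finite_game :: "'i set \<Rightarrow> ('i \<Rightarrow> 'a set) \<Rightarrow> bool" where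
  "finite_game N A \<longleftrightarrow> finite N \<and> (\<forall>i\<in>N. finite (A i) \<and> A i \<noteq> {})"

definition dist_on :: "'x set \<Rightarrow> ('x \<Rightarrow> real) \<Rightarrow> bool" where
  "dist_on S p \<longleftrightarrow> (\<forall>x. 0 \<le> p x) \<and> (\<forall>x. x \<notin> S \<longrightarrow> p x = 0) \<and> sum p S = 1"

definition supp :: "('x \<Rightarrow> real) \<Rightarrow> 'x set" where
  "supp p = {x. p x \<noteq> 0}"

definition CE :: "'i set \<Rightarrow> ('i \<Rightarrow> 'a set) \<Rightarrow> ('i \<Rightarrow> ('i \<Rightarrow> 'a) \<Rightarrow> real)
    \<Rightarrow> (('i \<Rightarrow> 'a) \<Rightarrow> real) set" where
  "CE N A u = {p. dist_on (PiE N A) p \<and>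
     (\<forall>i\<in>N. \<forall>ai\<in>A i. (\<Sum>a\<in>{a\<in>PiE N A. a i = ai}. p a) > 0 \<longrightarrow>
        (\<forall>b\<in>A i. (\<Sum>a\<in>{a\<in>PiE N A. a i = ai}. p a * (u i a - u i (a(i := b)))) \<ge> 0))}"

definition I_q :: "'i set \<Rightarrow> ('i \<Rightarrow> 'a set) \<Rightarrow> (('i \<Rightarrow> 'a) \<Rightarrow> real)
    \<Rightarrow> (('i \<Rightarrow> 'a) \<Rightarrow> real) set" where
  "I_q N A q = {\<mu>'. dist_on (PiE N A) \<mu>' \<and> supp \<mu>' \<subseteq> supp q \<and>
     (\<Sum>a\<in>PiE N A. \<mu>' a * ln (q a)) = (\<Sum>a\<in>PiE N A. q a * ln (q a))}"

definition I_set :: "'i set \<Rightarrow> ('i \<Rightarrow> 'a set) \<Rightarrow> ('i \<Rightarrow> ('i \<Rightarrow> 'a) \<Rightarrow> real)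
    \<Rightarrow> (('i \<Rightarrow> 'a) \<Rightarrow> real) set" where
  "I_set N A u = (\<Union>q\<in>CE N A u. I_q N A q)"

text \<open>Multilinear extension of utilities to mixed profiles tau (tau j is a
  distribution over A j).\<close>
definition mixed_util :: "'i set \<Rightarrow> ('i \<Rightarrow> 'a set) \<Rightarrow> ('i \<Rightarrow> ('i \<Rightarrow> 'a) \<Rightarrow> real)
    \<Rightarrow> 'i \<Rightarrow> ('i \<Rightarrow> 'a \<Rightarrow> real) \<Rightarrow> real" where
  "mixed_util N A u i \<tau> = (\<Sum>a\<in>PiE N A. (\<Prod>j\<in>N. \<tau> j (a j)) * u i a)"

definition point_mass :: "'x \<Rightarrow> 'x \<Rightarrow> real" where
  "point_mass x = (\<lambda>y. if y = x then 1 else 0)"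

text \<open>Entropy (with 0 log 0 = 0, automatic since ln 0 = 0 in Isabelle).\<close>
definition entropy :: "'x set \<Rightarrow> ('x \<Rightarrow> real) \<Rightarrow> real" where
  "entropy S q = - (\<Sum>m\<in>S. q m * ln (q m))"

definition Delta_D :: "'i set \<Rightarrow> ('i \<Rightarrow> 'm set) \<Rightarrow> (('i \<Rightarrow> 'm) \<Rightarrow> real)
    \<Rightarrow> (('i \<Rightarrow> 'm) \<Rightarrow> real) set \<Rightarrow> (('i \<Rightarrow> 'm) \<Rightarrow> real) set" where
  "Delta_D N M \<eta> F = {q. dist_on (PiE N M) q \<and>
     (\<forall>f\<in>F. (\<Sum>m\<in>PiE N M. q m * f m) = (\<Sum>m\<in>PiE N M. \<eta> m * f m))}"

definition maxent_belief :: "'i set \<Rightarrow> ('i \<Rightarrow> 'm set) \<Rightarrow> (('i \<Rightarrow> 'm) \<Rightarrow> real)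
    \<Rightarrow> (('i \<Rightarrow> 'm) \<Rightarrow> real) set \<Rightarrow> (('i \<Rightarrow> 'm) \<Rightarrow> real) \<Rightarrow> bool" where
  "maxent_belief N M \<eta> F q \<longleftrightarrow> q \<in> Delta_D N M \<eta> F \<and>
     (\<forall>q'\<in>Delta_D N M \<eta> F. q' \<noteq> q \<longrightarrow> entropy (PiE N M) q' < entropy (PiE N M) q)"

definition implements ::
  "'i set \<Rightarrow> ('i \<Rightarrow> 'a set) \<Rightarrow> ('i \<Rightarrow> ('i \<Rightarrow> 'a) \<Rightarrow> real)
   \<Rightarrow> ('i \<Rightarrow> 'm set) \<Rightarrow> (('i \<Rightarrow> 'm) \<Rightarrow> real) \<Rightarrow> (('i \<Rightarrow> 'm) \<Rightarrow> real) set
   \<Rightarrow> ('i \<Rightarrow> 'm \<Rightarrow> 'a \<Rightarrow> real) \<Rightarrow> (('i \<Rightarrow> 'a) \<Rightarrow> real) \<Rightarrow> bool" where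
  "implements N A u M \<eta> F \<sigma> \<mu> \<longleftrightarrow>
     (\<forall>i\<in>N. finite (M i) \<and> M i \<noteq> {}) \<and> dist_on (PiE N M) \<eta> \<and>
     (\<forall>i\<in>N. \<forall>mi\<in>M i. dist_on (A i) (\<sigma> i mi)) \<and>
     (\<exists>q. maxent_belief N M \<eta> F q \<and>
        (\<forall>i\<in>N. \<forall>mi\<in>M i. (\<Sum>m\<in>{m\<in>PiE N M. m i = mi}. q m) > 0 \<longrightarrow>
           (\<forall>a'\<in>A i. (\<Sum>m\<in>{m\<in>PiE N M. m i = mi}.
               q m * (mixed_util N A u i (\<lambda>j. \<sigma> j (m j))
                      - mixed_util N A u i ((\<lambda>j. \<sigma> j (m j))(i := point_mass a')))) \<ge> 0))) \<and>
     (\<forall>a\<in>PiE N A. \<mu> a = (\<Sum>m\<in>PiE N M. \<eta> m * (\<Prod>j\<in>N. \<sigma> j (m j) (a j))))"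

definition directly_implementable ::
  "'i set \<Rightarrow> ('i \<Rightarrow> 'a set) \<Rightarrow> ('i \<Rightarrow> ('i \<Rightarrow> 'a) \<Rightarrow> real) \<Rightarrow> (('i \<Rightarrow> 'a) \<Rightarrow> real) \<Rightarrow> bool" where
  "directly_implementable N A u \<mu> \<longleftrightarrow>
     (\<exists>\<eta> F. implements N A u A \<eta> F (\<lambda>i ai. point_mass ai) \<mu>)"

end

theory Submission
  imports Defs
begin

lemma tangentA:
  fixes x z :: real assumes "0 < z" "0 \<le> x"
  shows "x * ln z + x - z \<le> x * ln x"
proof (cases "x = 0")
  case True then show ?thesis using assms by simp
next
  case False
  then have x: "0 < x" using assms by simp
  have "ln z - ln x \<le> (z - x) / x" using ln_diff_le[OF assms(1) x] .
  then have "x * (ln z - ln x) \<le> z - x" using x by (simp add: field_simps)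
  then show ?thesis by (simp add: algebra_simps)
qed

lemma tangentA_strict:
  fixes x z :: real assumes "0 < z" "0 \<le> x" "x \<noteq> z"
  shows "x * ln z + x - z < x * ln x"
proof (cases "x = 0")
  case True then show ?thesis using assms by simp
next
  case False
  then have x: "0 < x" using assms by simp
  have "ln z - ln x < (z - x) / x" using ln_diff_less[OF assms(1) x] assms(3) by simp
  then have "x * (ln z - ln x) < z - x" using x by (simp add: field_simps)
  then show ?thesis by (simp add: algebra_simps)
qed

lemma quadB:
  fixes x h :: real assumes "0 < x" "0 < x + h"
  shows "- x * ln x - h * (ln x + 1) - h\<^sup>2 / x \<le> - (x + h) * ln (x + h)"
proof -
  have "ln (x + h) - ln x \<le> (x + h - x) / x" using ln_diff_le[OF assms(2) assms(1)] .
  then have "(x + h) * (ln (x + h) - ln x) \<le> (x + h) * (h / x)"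
    using assms by (intro mult_left_mono) auto
  also have "\<dots> = h + h\<^sup>2 / x" using assms by (simp add: field_simps power2_eq_square)
  finally show ?thesis by (simp add: algebra_simps)
qed

lemma gibbs:
  fixes P :: "'x set" and p q :: "'x \<Rightarrow> real"
  assumes fin: "finite P" and dp: "dist_on P p" and dq: "dist_on P q"
    and eq: "(\<Sum>a\<in>P. p a * ln (q a)) = (\<Sum>a\<in>P. q a * ln (q a))"
    and sup: "\<forall>a\<in>P. q a = 0 \<longrightarrow> p a = 0" and ne: "p \<noteq> q"
  shows "entropy P p < entropy P q"
proof -
  from ne obtain a where a: "p a \<noteq> q a" by auto
  have aP: "a \<in> P" using a dp dq unfolding dist_on_def by metis
  have qa: "0 < q a" using a aP sup dq unfolding dist_on_def by (metis order_le_less)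
  define g where "g b = p b * ln (p b) - (p b * ln (q b) + p b - q b)" for b
  have gnn: "0 \<le> g b" if "b \<in> P" for b
  proof (cases "q b = 0")
    case True then show ?thesis using sup that by (simp add: g_def)
  next
    case False then have "0 < q b" using dq unfolding dist_on_def by (metis order_le_less)
    then show ?thesis using tangentA[of "q b" "p b"] dp unfolding g_def dist_on_def by auto
  qed
  have gpos: "0 < g a" using tangentA_strict[OF qa, of "p a"] dp a unfolding g_def dist_on_def by auto
  have "0 < sum g P" by (rule sum_pos2[where f=g, OF fin aP gpos gnn])
  also have "sum g P = (\<Sum>b\<in>P. p b * ln (p b)) - (\<Sum>b\<in>P. p b * ln (q b)) - sum p P + sum q P"
    unfolding g_def by (simp add: sum_subtractf sum.distrib)
  also have "\<dots> = entropy P q - entropy P p"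
    using eq dp dq unfolding entropy_def dist_on_def by simp
  finally show ?thesis by simp
qed

lemma maxent_supp:
  fixes P :: "'x set" and q \<mu> :: "'x \<Rightarrow> real"
  assumes fin: "finite P" and dq: "dist_on P q" and dm: "dist_on P \<mu>"
    and H: "\<forall>t::real. dist_on P (\<lambda>a. q a + t * (\<mu> a - q a)) \<longrightarrow>
              entropy P (\<lambda>a. q a + t * (\<mu> a - q a)) \<le> entropy P q"
  shows "\<forall>a\<in>P. q a = 0 \<longrightarrow> \<mu> a = 0"
proof (rule ccontr)
  assume "\<not> ?thesis"
  then obtain a where aP: "a \<in> P" and qa: "q a = 0" and ma: "\<mu> a \<noteq> 0" by auto
  have qnn: "\<And>b. 0 \<le> q b" and mnn: "\<And>b. 0 \<le> \<mu> b" using dq dm unfolding dist_on_def by auto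
  define w where "w b = (if q b = 0 then \<mu> b else 0)" for b
  define m where "m = sum w P"
  have "0 < m" unfolding m_def
    by (rule sum_pos2[where f=w, OF fin aP]) (use qa ma mnn in \<open>auto simp: w_def order_le_less\<close>)
  define D where "D = \<bar>entropy P q - entropy P \<mu>\<bar> + 1"
  define t where "t = exp (- D / m)"
  have t0: "0 < t" unfolding t_def by simp
  have "0 < D" unfolding D_def by simp
  then have t1: "t < 1" unfolding t_def using \<open>0 < m\<close> by simp
  have lnt: "ln t = - D / m" unfolding t_def by simp
  define p where "p b = q b + t * (\<mu> b - q b)" for b
  have pform: "p b = (1 - t) * q b + t * \<mu> b" for b unfolding p_def by (simp add: algebra_simps)
  have pnn: "0 \<le> p b" for b unfolding pform using t0 t1 qnn mnn by (simp add: add_nonneg_nonneg)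
  have dp: "dist_on P p"
    unfolding dist_on_def
  proof (intro conjI allI impI)
    show "0 \<le> p x" for x using pnn .
    show "p x = 0" if "x \<notin> P" for x using that dq dm unfolding p_def dist_on_def by simp
    show "sum p P = 1" using dq dm unfolding p_def dist_on_def
      by (simp add: sum.distrib sum_subtractf sum_distrib_left[symmetric])
  qed
  have pt: "(1 - t) * (- q b * ln (q b)) + t * (- \<mu> b * ln (\<mu> b)) - w b * t * ln t \<le> - p b * ln (p b)"
    if "b \<in> P" for b
  proof (cases "q b = 0")
    case True
    show ?thesis
    proof (cases "\<mu> b = 0")
      case True then show ?thesis using \<open>q b = 0\<close> by (simp add: p_def w_def)
    next
      case False
      then have mb: "0 < \<mu> b" using mnn[of b] by linarith
      have "p b = t * \<mu> b" using True by (simp add: p_def)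
      moreover have "ln (t * \<mu> b) = ln t + ln (\<mu> b)" using t0 mb by (simp add: ln_mult)
      ultimately show ?thesis using True by (simp add: w_def algebra_simps)
    qed
  next
    case False
    then have qb: "0 < q b" using qnn[of b] by linarith
    have zb: "0 < p b" unfolding pform using t0 t1 qb mnn
      by (simp add: add_pos_nonneg)
    have A1: "q b * ln (p b) + q b - p b \<le> q b * ln (q b)" using tangentA[OF zb qnn] .
    have A2: "\<mu> b * ln (p b) + \<mu> b - p b \<le> \<mu> b * ln (\<mu> b)" using tangentA[OF zb mnn] .
    have "(1 - t) * (q b * ln (p b) + q b - p b) \<le> (1 - t) * (q b * ln (q b))"
      using A1 t1 by (intro mult_left_mono) auto
    moreover have "t * (\<mu> b * ln (p b) + \<mu> b - p b) \<le> t * (\<mu> b * ln (\<mu> b))"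
      using A2 t0 by (intro mult_left_mono) auto
    moreover have "(1 - t) * (q b * ln (p b) + q b - p b) + t * (\<mu> b * ln (p b) + \<mu> b - p b)
        = p b * ln (p b)" unfolding pform by (simp add: algebra_simps)
    ultimately show ?thesis using False by (simp add: w_def algebra_simps)
  qed
  have "(\<Sum>b\<in>P. (1 - t) * (- q b * ln (q b)) + t * (- \<mu> b * ln (\<mu> b)) - w b * t * ln t)
      \<le> (\<Sum>b\<in>P. - p b * ln (p b))" by (rule sum_mono) (use pt in auto)
  moreover have "(\<Sum>b\<in>P. (1 - t) * (- q b * ln (q b)) + t * (- \<mu> b * ln (\<mu> b)) - w b * t * ln t)
      = (1 - t) * entropy P q + t * entropy P \<mu> - m * t * ln t"
    unfolding entropy_def m_def
    by (simp add: sum.distrib sum_subtractf sum_distrib_left[symmetric] sum_distrib_right[symmetric] sum_negf)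
  moreover have "(\<Sum>b\<in>P. - p b * ln (p b)) = entropy P p" unfolding entropy_def by (simp add: sum_negf)
  ultimately have E: "(1 - t) * entropy P q + t * entropy P \<mu> - m * t * ln t \<le> entropy P p" by simp
  have "m * t * ln t = - t * D" using lnt \<open>0 < m\<close> by simp
  with E have "entropy P q + t * (entropy P \<mu> - entropy P q + D) \<le> entropy P p"
    by (simp add: algebra_simps)
  moreover have "0 < t * (entropy P \<mu> - entropy P q + D)"
    using t0 unfolding D_def by (intro mult_pos_pos) auto
  moreover have "entropy P p \<le> entropy P q" using H dp unfolding p_def by blast
  ultimately show False by simp
qed

lemma maxent_eq:
  fixes P :: "'x set" and q \<mu> :: "'x \<Rightarrow> real"
  assumes fin: "finite P" and dq: "dist_on P q" and dm: "dist_on P \<mu>"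
    and H: "\<forall>t::real. dist_on P (\<lambda>a. q a + t * (\<mu> a - q a)) \<longrightarrow>
              entropy P (\<lambda>a. q a + t * (\<mu> a - q a)) \<le> entropy P q"
    and sup: "\<forall>a\<in>P. q a = 0 \<longrightarrow> \<mu> a = 0"
  shows "(\<Sum>a\<in>P. \<mu> a * ln (q a)) = (\<Sum>a\<in>P. q a * ln (q a))"
proof (rule ccontr)
  assume neq: "\<not> ?thesis"
  have qnn: "\<And>b. 0 \<le> q b" and mnn: "\<And>b. 0 \<le> \<mu> b" using dq dm unfolding dist_on_def by auto
  have m1: "\<mu> b \<le> 1" if "b \<in> P" for b
  proof -
    have "\<mu> b \<le> sum \<mu> P" by (rule member_le_sum) (use that fin mnn in auto)
    then show ?thesis using dm unfolding dist_on_def by simp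
  qed
  define d where "d b = \<mu> b - q b" for b
  define L where "L = (\<Sum>b\<in>P. d b * ln (q b))"
  define C where "C = (\<Sum>b\<in>P. (d b)\<^sup>2 / q b)"
  have "L \<noteq> 0" using neq unfolding L_def d_def by (simp add: sum_subtractf left_diff_distrib)
  have C0: "0 \<le> C" unfolding C_def using qnn by (intro sum_nonneg) auto
  define Q where "Q = q ` {b\<in>P. 0 < q b}"
  have "{b\<in>P. 0 < q b} \<noteq> {}"
  proof
    assume "{b\<in>P. 0 < q b} = {}"
    then have "\<forall>b\<in>P. q b = 0" using qnn by (metis (mono_tags, lifting) empty_Collect_eq order_le_less)
    then have "sum q P = 0" by simp
    then show False using dq unfolding dist_on_def by simp
  qed
  then have Qne: "Q \<noteq> {}" and Qfin: "finite Q" unfolding Q_def using fin by auto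
  define qm where "qm = Min Q"
  have qm0: "0 < qm" unfolding qm_def using Qne Qfin by (auto simp: Q_def)
  have qmle: "qm \<le> q b" if "b \<in> P" "0 < q b" for b
    unfolding qm_def using Qfin that by (auto simp: Q_def intro: Min_le)
  define s where "s = min (1/2) (min (qm/2) (\<bar>L\<bar> / (2 * (C + 1))))"
  have s0: "0 < s" unfolding s_def using qm0 \<open>L \<noteq> 0\<close> C0 by auto
  have s1: "s < 1" and sq: "s < qm" unfolding s_def using qm0 by auto
  have sC: "s * (C + 1) \<le> \<bar>L\<bar> / 2"
  proof -
    have "s \<le> \<bar>L\<bar> / (2 * (C + 1))" unfolding s_def by simp
    then have "s * (C + 1) \<le> \<bar>L\<bar> / (2 * (C + 1)) * (C + 1)" using C0 by (intro mult_right_mono) auto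
    also have "\<bar>L\<bar> / (2 * (C + 1)) * (C + 1) = \<bar>L\<bar> / 2" using C0 by (simp add: field_simps)
    finally show ?thesis .
  qed
  define t where "t = (if 0 < L then - s else s)"
  have tL: "t * L = - s * \<bar>L\<bar>" unfolding t_def using \<open>L \<noteq> 0\<close> by auto
  have tt: "t\<^sup>2 = s\<^sup>2" unfolding t_def by auto
  define p where "p b = q b + t * (\<mu> b - q b)" for b
  have ppos: "0 < p b" if "b \<in> P" "0 < q b" for b
  proof (cases "0 < L")
    case True
    then have "p b = (1 + s) * q b - s * \<mu> b" unfolding p_def t_def by (simp add: algebra_simps)
    moreover have "s * \<mu> b \<le> s" using m1[OF that(1)] s0 by (simp add: mult_left_le)
    moreover have "s < q b" using sq qmle[OF that] by simp
    moreover have "0 \<le> s * q b" using s0 that by simp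
    ultimately show ?thesis by (simp add: algebra_simps)
  next
    case False
    then have "p b = (1 - s) * q b + s * \<mu> b" unfolding p_def t_def by (simp add: algebra_simps)
    moreover have "0 < (1 - s) * q b" using s1 that by simp
    moreover have "0 \<le> s * \<mu> b" using s0 mnn by simp
    ultimately show ?thesis by simp
  qed
  have pzero: "p b = 0" if "b \<notin> P \<or> q b = 0" for b
    using that sup dq dm unfolding p_def dist_on_def by auto
  have pnn: "0 \<le> p b" for b
    using ppos[of b] pzero[of b] qnn[of b] by (cases "b \<in> P \<and> 0 < q b") (auto simp: order_le_less)
  have dp: "dist_on P p"
    unfolding dist_on_def
  proof (intro conjI allI impI)
    show "0 \<le> p x" for x using pnn .
    show "p x = 0" if "x \<notin> P" for x using pzero that by simp
    show "sum p P = 1" using dq dm unfolding p_def dist_on_def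
      by (simp add: sum.distrib sum_subtractf sum_distrib_left[symmetric])
  qed
  have pt: "- q b * ln (q b) - t * d b * (ln (q b) + 1) - t\<^sup>2 * ((d b)\<^sup>2 / q b) \<le> - p b * ln (p b)"
    if "b \<in> P" for b
  proof (cases "q b = 0")
    case True then show ?thesis using pzero[of b] sup that by (simp add: d_def)
  next
    case False
    then have qb: "0 < q b" using qnn[of b] by linarith
    have "0 < q b + t * d b" using ppos[OF that qb] unfolding p_def d_def .
    from quadB[OF qb this] have "- q b * ln (q b) - t * d b * (ln (q b) + 1) - (t * d b)\<^sup>2 / q b
      \<le> - p b * ln (p b)" unfolding p_def d_def by (simp add: algebra_simps)
    then show ?thesis by (simp add: power_mult_distrib)
  qed
  have "(\<Sum>b\<in>P. - q b * ln (q b) - t * d b * (ln (q b) + 1) - t\<^sup>2 * ((d b)\<^sup>2 / q b))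
      \<le> (\<Sum>b\<in>P. - p b * ln (p b))" by (rule sum_mono) (use pt in auto)
  moreover have "(\<Sum>b\<in>P. - q b * ln (q b) - t * d b * (ln (q b) + 1) - t\<^sup>2 * ((d b)\<^sup>2 / q b))
      = entropy P q - t * (L + sum d P) - t\<^sup>2 * C"
    unfolding entropy_def L_def C_def
    apply (simp add: sum.distrib sum_subtractf sum_distrib_left[symmetric] sum_negf algebra_simps)
    by (simp add: sum_distrib_left)
  moreover have "sum d P = 0" unfolding d_def using dq dm unfolding dist_on_def by (simp add: sum_subtractf)
  moreover have "(\<Sum>b\<in>P. - p b * ln (p b)) = entropy P p" unfolding entropy_def by (simp add: sum_negf)
  ultimately have E: "entropy P q - t * L - t\<^sup>2 * C \<le> entropy P p" by simp
  have "entropy P q - t * L - t\<^sup>2 * C = entropy P q + s * (\<bar>L\<bar> - s * C)"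
    using tL tt by (simp add: power2_eq_square algebra_simps)
  moreover have "0 < s * (\<bar>L\<bar> - s * C)"
  proof -
    have "s * C < \<bar>L\<bar>" using sC s0 \<open>L \<noteq> 0\<close> by (simp add: algebra_simps)
    then show ?thesis using s0 by simp
  qed
  moreover have "entropy P p \<le> entropy P q" using H dp unfolding p_def by blast
  ultimately show False using E by simp
qed

lemma upd_PiE: "i \<in> N \<Longrightarrow> b \<in> A i \<Longrightarrow> m \<in> PiE N A \<Longrightarrow> m(i := b) \<in> PiE N A"
  using PiE_fun_upd[of b A i m N] by (simp add: insert_absorb)

lemma prod_pm:
  assumes "finite N" "m \<in> PiE N A" "a \<in> PiE N A"
  shows "(\<Prod>j\<in>N. point_mass (m j) (a j)) = (if m = a then 1 else 0)"
proof (cases "m = a")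
  case True then show ?thesis by (simp add: point_mass_def)
next
  case False
  then obtain j where "j \<in> N" "m j \<noteq> a j" using PiE_ext[OF assms(2,3)] by blast
  then have "(\<Prod>j\<in>N. point_mass (m j) (a j)) = 0"
    using assms(1) by (intro prod_zero) (auto simp: point_mass_def intro!: bexI[of _ j])
  then show ?thesis using False by simp
qed

lemma sum_pm:
  assumes "finite N" "\<forall>i\<in>N. finite (A i)" "a \<in> PiE N A"
  shows "(\<Sum>m\<in>PiE N A. \<eta> m * (\<Prod>j\<in>N. point_mass (m j) (a j))) = \<eta> a"
proof -
  have "(\<Sum>m\<in>PiE N A. \<eta> m * (\<Prod>j\<in>N. point_mass (m j) (a j)))
     = (\<Sum>m\<in>PiE N A. if m = a then \<eta> m else 0)"
    using prod_pm[OF assms(1) _ assms(3)] by (intro sum.cong) auto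
  also have "\<dots> = \<eta> a" using assms by (simp add: finite_PiE)
  finally show ?thesis .
qed

lemma mixed_pm:
  assumes "finite N" "\<forall>i\<in>N. finite (A i)" "m \<in> PiE N A"
  shows "mixed_util N A u i (\<lambda>j. point_mass (m j)) = u i m"
proof -
  have "mixed_util N A u i (\<lambda>j. point_mass (m j))
     = (\<Sum>a\<in>PiE N A. if a = m then u i a else 0)"
    unfolding mixed_util_def using prod_pm[OF assms(1) assms(3)] by (intro sum.cong) auto
  also have "\<dots> = u i m" using assms by (simp add: finite_PiE)
  finally show ?thesis .
qed

lemma mixed_pm_upd:
  assumes "finite N" "\<forall>i\<in>N. finite (A i)" "m \<in> PiE N A" "i \<in> N" "b \<in> A i"
  shows "mixed_util N A u i ((\<lambda>j. point_mass (m j))(i := point_mass b)) = u i (m(i := b))"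
proof -
  have "(\<lambda>j. point_mass (m j))(i := point_mass b) = (\<lambda>j. point_mass ((m(i := b)) j))"
    by (rule ext) simp
  then show ?thesis using mixed_pm[OF assms(1,2) upd_PiE[OF assms(4,5,3)]] by simp
qed

lemma pm_dist: "finite S \<Longrightarrow> x \<in> S \<Longrightarrow> dist_on S (point_mass x)"
  unfolding dist_on_def point_mass_def by auto

theorem proposition2:
  fixes N :: "'i set" and A :: "'i \<Rightarrow> 'a set"
    and u :: "'i \<Rightarrow> ('i \<Rightarrow> 'a) \<Rightarrow> real" and \<mu> :: "('i \<Rightarrow> 'a) \<Rightarrow> real"
  assumes "finite_game N A"
    and "dist_on (PiE N A) \<mu>"
  shows "directly_implementable N A u \<mu> \<longleftrightarrow> \<mu> \<in> I_set N A u"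
proof -
  let ?P = "PiE N A"
  have fN: "finite N" and fA: "\<forall>i\<in>N. finite (A i)" and neA: "\<forall>i\<in>N. A i \<noteq> {}"
    using assms(1) unfolding finite_game_def by auto
  have fP: "finite ?P" using fN fA by (simp add: finite_PiE)
  have dm: "dist_on ?P \<mu>" by fact
  have obed: "(\<Sum>m\<in>{m\<in>?P. m i = mi}. q m * (mixed_util N A u i (\<lambda>j. point_mass (m j))
                      - mixed_util N A u i ((\<lambda>j. point_mass (m j))(i := point_mass a'))))
            = (\<Sum>m\<in>{m\<in>?P. m i = mi}. q m * (u i m - u i (m(i := a'))))"
    if "i \<in> N" "a' \<in> A i" for q :: "('i \<Rightarrow> 'a) \<Rightarrow> real" and i mi a'
    using mixed_pm[OF fN fA] mixed_pm_upd[OF fN fA _ that] by (intro sum.cong) auto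
  show ?thesis
  proof
    assume "directly_implementable N A u \<mu>"
    then obtain \<eta> F where impl: "implements N A u A \<eta> F (\<lambda>i ai. point_mass ai) \<mu>"
      unfolding directly_implementable_def by blast
    have de: "dist_on ?P \<eta>" using impl unfolding implements_def by blast
    have "\<forall>a\<in>?P. \<mu> a = (\<Sum>m\<in>?P. \<eta> m * (\<Prod>j\<in>N. point_mass (m j) (a j)))"
      using impl unfolding implements_def by blast
    then have "\<forall>a\<in>?P. \<mu> a = \<eta> a" using sum_pm[OF fN fA] by simp
    then have em: "\<eta> = \<mu>"
    proof -
      assume h: "\<forall>a\<in>?P. \<mu> a = \<eta> a"
      show "\<eta> = \<mu>"
      proof
        fix a show "\<eta> a = \<mu> a"
        proof (cases "a \<in> ?P")
          case True then show ?thesis using h by simp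
        next
          case False then show ?thesis using de dm unfolding dist_on_def by simp
        qed
      qed
    qed
    obtain q where me: "maxent_belief N A \<eta> F q"
      and ob: "\<forall>i\<in>N. \<forall>mi\<in>A i. (\<Sum>m\<in>{m\<in>?P. m i = mi}. q m) > 0 \<longrightarrow>
           (\<forall>a'\<in>A i. (\<Sum>m\<in>{m\<in>?P. m i = mi}.
               q m * (mixed_util N A u i (\<lambda>j. point_mass (m j))
                      - mixed_util N A u i ((\<lambda>j. point_mass (m j))(i := point_mass a')))) \<ge> 0)"
      using impl unfolding implements_def by blast
    have qD: "q \<in> Delta_D N A \<eta> F" using me unfolding maxent_belief_def by blast
    have dq: "dist_on ?P q" using qD unfolding Delta_D_def by blast
    have qCE: "q \<in> CE N A u"
      unfolding CE_def
    proof (intro CollectI conjI dq ballI impI)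
      fix i ai b assume i: "i \<in> N" "ai \<in> A i" "0 < (\<Sum>m\<in>{m\<in>?P. m i = ai}. q m)" "b \<in> A i"
      have "0 \<le> (\<Sum>m\<in>{m\<in>?P. m i = ai}.
               q m * (mixed_util N A u i (\<lambda>j. point_mass (m j))
                      - mixed_util N A u i ((\<lambda>j. point_mass (m j))(i := point_mass b))))"
        using ob i by blast
      then show "0 \<le> (\<Sum>m\<in>{m\<in>?P. m i = ai}. q m * (u i m - u i (m(i := b))))"
        using obed[OF i(1) i(4), of q ai] by simp
    qed
    have H: "\<forall>t::real. dist_on ?P (\<lambda>a. q a + t * (\<mu> a - q a)) \<longrightarrow>
              entropy ?P (\<lambda>a. q a + t * (\<mu> a - q a)) \<le> entropy ?P q"
    proof (intro allI impI)
      fix t :: real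
      assume dpt: "dist_on ?P (\<lambda>a. q a + t * (\<mu> a - q a))"
      have "(\<lambda>a. q a + t * (\<mu> a - q a)) \<in> Delta_D N A \<eta> F"
        unfolding Delta_D_def
      proof (intro CollectI conjI ballI dpt)
        fix f assume "f \<in> F"
        then have qf: "(\<Sum>m\<in>?P. q m * f m) = (\<Sum>m\<in>?P. \<eta> m * f m)"
          using qD unfolding Delta_D_def by blast
        have "(\<Sum>m\<in>?P. (q m + t * (\<mu> m - q m)) * f m)
            = (\<Sum>m\<in>?P. q m * f m) + t * ((\<Sum>m\<in>?P. \<mu> m * f m) - (\<Sum>m\<in>?P. q m * f m))"
          by (simp add: algebra_simps sum.distrib sum_subtractf sum_distrib_left)
        also have "\<dots> = (\<Sum>m\<in>?P. \<eta> m * f m)" using qf em by simp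
        finally show "(\<Sum>m\<in>?P. (q m + t * (\<mu> m - q m)) * f m) = (\<Sum>m\<in>?P. \<eta> m * f m)" .
      qed
      then show "entropy ?P (\<lambda>a. q a + t * (\<mu> a - q a)) \<le> entropy ?P q"
        using me unfolding maxent_belief_def by (metis order_le_less)
    qed
    have sp: "\<forall>a\<in>?P. q a = 0 \<longrightarrow> \<mu> a = 0" by (rule maxent_supp[OF fP dq dm H])
    have eq: "(\<Sum>a\<in>?P. \<mu> a * ln (q a)) = (\<Sum>a\<in>?P. q a * ln (q a))"
      by (rule maxent_eq[OF fP dq dm H sp])
    have "supp \<mu> \<subseteq> supp q"
      unfolding supp_def using sp dm unfolding dist_on_def by blast
    then have "\<mu> \<in> I_q N A q" unfolding I_q_def using dm eq by blast
    then show "\<mu> \<in> I_set N A u" unfolding I_set_def using qCE by blast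
  next
    assume "\<mu> \<in> I_set N A u"
    then obtain q where qCE: "q \<in> CE N A u" and mI: "\<mu> \<in> I_q N A q" unfolding I_set_def by blast
    have dq: "dist_on ?P q" using qCE unfolding CE_def by blast
    have sup: "supp \<mu> \<subseteq> supp q" and eqm: "(\<Sum>a\<in>?P. \<mu> a * ln (q a)) = (\<Sum>a\<in>?P. q a * ln (q a))"
      using mI unfolding I_q_def by auto
    define F :: "(('i \<Rightarrow> 'a) \<Rightarrow> real) set"
      where "F = {\<lambda>a. ln (q a), \<lambda>a. if q a = 0 then 1 else 0}"
    have z1: "(\<Sum>m\<in>?P. q m * (if q m = 0 then 1 else 0)) = 0" by (intro sum.neutral) auto
    have z2: "(\<Sum>m\<in>?P. \<mu> m * (if q m = 0 then 1 else 0)) = 0"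
      using sup unfolding supp_def by (intro sum.neutral) auto
    have qD: "q \<in> Delta_D N A \<mu> F" unfolding Delta_D_def F_def using dq eqm z1 z2 by auto
    have me: "maxent_belief N A \<mu> F q"
      unfolding maxent_belief_def
    proof (intro conjI qD ballI impI)
      fix q' assume q'D: "q' \<in> Delta_D N A \<mu> F" and ne: "q' \<noteq> q"
      have dq': "dist_on ?P q'" using q'D unfolding Delta_D_def by blast
      have e1: "(\<Sum>m\<in>?P. q' m * ln (q m)) = (\<Sum>m\<in>?P. \<mu> m * ln (q m))"
        using q'D unfolding Delta_D_def F_def by auto
      have e2: "(\<Sum>m\<in>?P. q' m * (if q m = 0 then 1 else 0)) = 0"
        using q'D z2 unfolding Delta_D_def F_def by auto
      have "\<forall>m\<in>?P. q' m * (if q m = 0 then 1 else 0) = 0"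
        using e2 fP dq' unfolding dist_on_def by (subst (asm) sum_nonneg_eq_0_iff) auto
      then have sp: "\<forall>a\<in>?P. q a = 0 \<longrightarrow> q' a = 0" by auto
      show "entropy ?P q' < entropy ?P q"
        by (rule gibbs[OF fP dq' dq _ sp ne]) (use e1 eqm in simp)
    qed
    have "implements N A u A \<mu> F (\<lambda>i ai. point_mass ai) \<mu>"
      unfolding implements_def
    proof (intro conjI)
      show "\<forall>i\<in>N. finite (A i) \<and> A i \<noteq> {}" using fA neA by blast
      show "dist_on ?P \<mu>" by fact
      show "\<forall>i\<in>N. \<forall>mi\<in>A i. dist_on (A i) (point_mass mi)"
        using fA by (intro ballI pm_dist) auto
      show "\<forall>a\<in>?P. \<mu> a = (\<Sum>m\<in>?P. \<mu> m * (\<Prod>j\<in>N. point_mass (m j) (a j)))"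
        using sum_pm[OF fN fA] by simp
      show "\<exists>q. maxent_belief N A \<mu> F q \<and>
        (\<forall>i\<in>N. \<forall>mi\<in>A i. (\<Sum>m\<in>{m\<in>?P. m i = mi}. q m) > 0 \<longrightarrow>
           (\<forall>a'\<in>A i. (\<Sum>m\<in>{m\<in>?P. m i = mi}.
               q m * (mixed_util N A u i (\<lambda>j. point_mass (m j))
                      - mixed_util N A u i ((\<lambda>j. point_mass (m j))(i := point_mass a')))) \<ge> 0))"
      proof (intro exI conjI ballI impI)
        show "maxent_belief N A \<mu> F q" by (rule me)
      next
        fix i mi a' assume i: "i \<in> N" "mi \<in> A i" "0 < (\<Sum>m\<in>{m\<in>?P. m i = mi}. q m)" "a' \<in> A i"
        have "0 \<le> (\<Sum>m\<in>{m\<in>?P. m i = mi}. q m * (u i m - u i (m(i := a'))))"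
          using qCE i unfolding CE_def by blast
        then show "0 \<le> (\<Sum>m\<in>{m\<in>?P. m i = mi}.
               q m * (mixed_util N A u i (\<lambda>j. point_mass (m j))
                      - mixed_util N A u i ((\<lambda>j. point_mass (m j))(i := point_mass a'))))"
          using obed[OF i(1) i(4), of q mi] by simp
      qed
    qed
    then show "directly_implementable N A u \<mu>" unfolding directly_implementable_def by blast
  qed
qed

end
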